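(* Let $\{X_n\}_{n\in\mathbb N}$ be a sequence of finite metric spaces with $|X_n|\to\infty$ as $n\to\infty$. Let $X=\bigsqcup_{n\in\mathbb N}X_n$ be a coarse disjoint union, and let $P_X$ be the averaging projection of the sequence. Then the following are equivalent: (1) $P_X$ is quasi-local; (2) for any $\alpha\in(0,\tfrac12]$ and any $c\in(0,1)$, there exists $R>0$ such that for any $n\in\mathbb N$ and $A\subseteq X_n$ with $\alpha|X_n|\leq|A|\leq|X_n|/2$, we have $|\partial_RA|>c|A|$; (3) for any $\alpha\in(0,\tfrac12]$, there exist $c\in(0,1)$ and $R>0$ such that for any $n\in\mathbb N$ and $A\subseteq X_n$ with $\alpha|X_n|\leq|A|\leq|X_n|/2$, we have $|\partial_RA|>c|A|$.
   Context: A coarse disjoint union of finite metric spaces $(X_n,d_n)$ is the set $X=\bigsqcup_n X_n$ with a metric $d$ that restricts to $d_n$ on each $X_n$ and satisfies $d(X_n,X_m)\to\infty$ as $n+m\to\infty$ with $m\neq n$. For a finite subset $F$ of a set $Y$, $P_F\in\mathfrak B(\ell^2(Y))$ is the orthogonal projection onto the span of $\chi_F$, i.e. $(P_F)_{x,y}=1/|F|$ if $x,y\in F$ and $0$ otherwise; the averaging projection of the sequence is $P_X=\sum_nP_{X_n}$ (strong operator topology sum) on $\ell^2(X)$. For $A\subseteq X$, $\chi_A$ also denotes the multiplication operator by its characteristic function. An operator $T\in\mathfrak B(\ell^2(X))$ is quasi-local if for every $\varepsilon>0$ there is $R>0$ such that $\|\chi_AT\chi_B\|\leq\varepsilon$ for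 all $A,B\subseteq X$ with $d(A,B)\geq R$. For $A\subseteq X_n$, $\partial_RA=\{x\in X_n\setminus A: d(x,A)\leq R\}$ is the outer $R$-boundary. *)

theory Defs
  imports "HOL-Analysis.Analysis"
begin

text \<open>Operators on l2(Y) are represented by their matrix kernels K :: Y => Y => complex.
  The operator norm of a (bounded) kernel operator is the supremum of |<f, K g>| over
  finitely supported f, g in the closed unit ball of l2(Y).\<close>
definition kernel_norm :: "('a \<Rightarrow> 'a \<Rightarrow> complex) \<Rightarrow> real" where
  "kernel_norm K = Sup {norm (\<Sum>x\<in>F. \<Sum>y\<in>F. cnj (f x) * K x y * g y) | F f g.
       finite F \<and> (\<Sum>x\<in>F. (cmod (f x))\<^sup>2) \<le> 1 \<and> (\<Sum>x\<in>F. (cmod (g x))\<^sup>2) \<le> 1}"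

text \<open>Kernel of chi_A T chi_B.\<close>
definition cut_kernel :: "'a set \<Rightarrow> ('a \<Rightarrow> 'a \<Rightarrow> complex) \<Rightarrow> 'a set \<Rightarrow> 'a \<Rightarrow> 'a \<Rightarrow> complex" where
  "cut_kernel A K B = (\<lambda>x y. if x \<in> A \<and> y \<in> B then K x y else 0)"

definition quasi_local :: "('a::metric_space \<Rightarrow> 'a \<Rightarrow> complex) \<Rightarrow> bool" where
  "quasi_local K \<longleftrightarrow> (\<forall>\<epsilon>>0. \<exists>R>0. \<forall>A B. setdist A B \<ge> R \<longrightarrow> kernel_norm (cut_kernel A K B) \<le> \<epsilon>)"

text \<open>Kernel of the projection P_F onto span of chi_F.\<close>
definition proj_kernel :: "'a set \<Rightarrow> 'a \<Rightarrow> 'a \<Rightarrow> complex" where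
  "proj_kernel F x y = (if x \<in> F \<and> y \<in> F then 1 / of_nat (card F) else 0)"

text \<open>Kernel of the averaging projection P_X = sum_n P_{X_n} (SOT sum, entrywise).\<close>
definition avg_proj_kernel :: "(nat \<Rightarrow> 'a set) \<Rightarrow> 'a \<Rightarrow> 'a \<Rightarrow> complex" where
  "avg_proj_kernel Xs x y = (\<Sum>n. proj_kernel (Xs n) x y)"

definition outer_boundary :: "'a::metric_space set \<Rightarrow> real \<Rightarrow> 'a set \<Rightarrow> 'a set" where
  "outer_boundary Y R A = {x \<in> Y - A. infdist x A \<le> R}"

definition coarse_disjoint_union :: "(nat \<Rightarrow> 'a::metric_space set) \<Rightarrow> bool" where
  "coarse_disjoint_union Xs \<longleftrightarrow>
     (\<forall>n. finite (Xs n) \<and> Xs n \<noteq> {}) \<and>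
     (\<forall>n m. n \<noteq> m \<longrightarrow> Xs n \<inter> Xs m = {}) \<and>
     (\<Union>n. Xs n) = UNIV \<and>
     (\<forall>R. \<exists>N. \<forall>n m. n \<noteq> m \<and> n + m \<ge> N \<longrightarrow> setdist (Xs n) (Xs m) \<ge> R)"

end

theory Submission
  imports Defs
begin

lemma infdist_finite_attains:
  fixes S :: "'a::metric_space set"
  assumes "finite S" "S \<noteq> {}"
  shows "\<exists>y\<in>S. infdist x S = dist x y"
proof -
  have "infdist x S = Min (dist x ` S)" using assms
    by (simp add: infdist_def cInf_eq_Min)
  moreover have "Min (dist x ` S) \<in> dist x ` S" using assms by simp
  ultimately show ?thesis by auto
qed


lemma growth:
  fixes Y A' :: "'a::metric_space set"
  assumes Y: "finite Y" and A': "A' \<subseteq> Y" "A' \<noteq> {}" and R0: "0 \<le> R0" and c0: "0 < c0"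
    and al: "\<alpha> * real (card Y) \<le> real (card A')"
    and ex: "\<And>S. S \<subseteq> Y \<Longrightarrow> \<alpha> * real (card Y) \<le> real (card S) \<Longrightarrow> real (card S) \<le> real (card Y) / 2
              \<Longrightarrow> real (card (outer_boundary Y R0 S)) > c0 * real (card S)"
  shows "real (card {x\<in>Y. infdist x A' \<le> real i * R0}) > real (card Y) / 2
     \<or> real (card {x\<in>Y. infdist x A' \<le> real i * R0}) \<ge> (1 + c0) ^ i * real (card A')"
proof (induction i)
  case 0
  have "A' \<subseteq> {x\<in>Y. infdist x A' \<le> real 0 * R0}" using A' by auto
  then have "card A' \<le> card {x\<in>Y. infdist x A' \<le> real 0 * R0}" using Y by (intro card_mono) auto
  then show ?case by simp
next
  case (Suc i)
  define S where "S = {x\<in>Y. infdist x A' \<le> real i * R0}"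
  define S' where "S' = {x\<in>Y. infdist x A' \<le> real (Suc i) * R0}"
  have fS: "finite S" "finite S'" using Y by (simp_all add: S_def S'_def)
  have A'S: "A' \<subseteq> S" using A' R0 by (auto simp: S_def)
  have SS': "S \<subseteq> S'" using R0 by (auto simp: S_def S'_def algebra_simps)
  have SneY: "S \<subseteq> Y" by (auto simp: S_def)
  have bS: "outer_boundary Y R0 S \<subseteq> S' - S"
  proof
    fix x assume x: "x \<in> outer_boundary Y R0 S"
    then have xY: "x \<in> Y" "x \<notin> S" and d: "infdist x S \<le> R0" by (auto simp: outer_boundary_def)
    have "S \<noteq> {}" using A'S A' by auto
    then obtain y where y: "y \<in> S" "infdist x S = dist x y" using infdist_finite_attains[OF fS(1)] by blast
    have "infdist x A' \<le> infdist y A' + dist x y" by (rule infdist_triangle)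
    also have "\<dots> \<le> real i * R0 + R0" using y d by (auto simp: S_def)
    finally show "x \<in> S' - S" using xY by (auto simp: S'_def algebra_simps)
  qed
  have cardS': "real (card S') \<ge> real (card S) + real (card (outer_boundary Y R0 S))"
  proof -
    have "S \<union> outer_boundary Y R0 S \<subseteq> S'" using SS' bS by auto
    then have "card (S \<union> outer_boundary Y R0 S) \<le> card S'" using fS by (intro card_mono) auto
    moreover have "card (S \<union> outer_boundary Y R0 S) = card S + card (outer_boundary Y R0 S)"
      using fS bS by (intro card_Un_disjoint) (auto intro: finite_subset)
    ultimately show ?thesis by simp
  qed
  have cSS': "real (card S) \<le> real (card S')" using SS' fS by (simp add: card_mono)
  show ?case
  proof (cases "real (card S) > real (card Y) / 2")
    case True
    then show ?thesis using cSS' unfolding S'_def by simp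
  next
    case False
    then have IH: "real (card S) \<ge> (1 + c0) ^ i * real (card A')" using Suc.IH unfolding S_def by auto
    have "real (card A') \<le> real (card S)" using A'S fS by (simp add: card_mono)
    then have "real (card (outer_boundary Y R0 S)) > c0 * real (card S)"
      using False al SneY by (intro ex) auto
    then have "real (card S') \<ge> (1 + c0) * real (card S)" using cardS' by (simp add: algebra_simps)
    moreover have "(1 + c0) * real (card S) \<ge> (1 + c0) * ((1 + c0) ^ i * real (card A'))"
      using IH c0 by (intro mult_left_mono) auto
    ultimately show ?thesis unfolding S'_def by simp
  qed
qed

lemma grow_big:
  fixes Y A' :: "'a::metric_space set"
  assumes Y: "finite Y" and A': "A' \<subseteq> Y" "A' \<noteq> {}" and R0: "0 \<le> R0" and c0: "0 < c0"
    and alp: "0 < \<alpha>"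
    and al: "\<alpha> * real (card Y) \<le> real (card A')"
    and ex: "\<And>S. S \<subseteq> Y \<Longrightarrow> \<alpha> * real (card Y) \<le> real (card S) \<Longrightarrow> real (card S) \<le> real (card Y) / 2
              \<Longrightarrow> real (card (outer_boundary Y R0 S)) > c0 * real (card S)"
    and k: "1 / \<alpha> < (1 + c0) ^ k"
  shows "real (card {x\<in>Y. infdist x A' \<le> real k * R0}) > real (card Y) / 2"
proof (rule ccontr)
  assume H: "\<not> ?thesis"
  then have G: "real (card {x\<in>Y. infdist x A' \<le> real k * R0}) \<ge> (1 + c0) ^ k * real (card A')"
    using growth[OF assms(1-5) al ex, of k] by auto
  have Yp: "real (card Y) > 0" using Y A' by (auto simp: card_gt_0_iff)
  have "1 < (1 + c0) ^ k * \<alpha>" using k alp by (simp add: field_simps)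
  then have "real (card Y) < (1 + c0) ^ k * \<alpha> * real (card Y)" using Yp by simp
  also have "\<dots> \<le> (1 + c0) ^ k * real (card A')" using al c0
    by (simp add: mult.assoc mult_left_mono)
  also have "\<dots> \<le> real (card {x\<in>Y. infdist x A' \<le> real k * R0})" using G .
  also have "\<dots> \<le> real (card Y)" using Y by (simp add: card_mono)
  finally show False by simp
qed

locale cdu =
  fixes Xs :: "nat \<Rightarrow> 'a::metric_space set"
  assumes fin: "\<And>n. finite (Xs n)" and ne: "\<And>n. Xs n \<noteq> {}"
    and disj: "\<And>n m. n \<noteq> m \<Longrightarrow> Xs n \<inter> Xs m = {}"
    and cov: "\<And>x. \<exists>n. x \<in> Xs n"
begin

definition idx :: "'a \<Rightarrow> nat" where "idx x = (THE n. x \<in> Xs n)"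

lemma idx_eq: "x \<in> Xs n \<Longrightarrow> idx x = n"
  unfolding idx_def using disj by (intro the_equality) auto

lemma in_idx: "x \<in> Xs (idx x)"
  using cov idx_eq by metis

lemma in_Xs_iff: "x \<in> Xs n \<longleftrightarrow> idx x = n"
  using idx_eq in_idx by metis

lemma K_eq: "avg_proj_kernel Xs x y =
   (if idx y = idx x then 1 / of_nat (card (Xs (idx x))) else 0)"
proof -
  have "(\<lambda>n. proj_kernel (Xs n) x y) =
     (\<lambda>n. if n = idx x then (if idx y = idx x then 1 / of_nat (card (Xs (idx x))) else 0) else 0)"
    by (auto simp: proj_kernel_def in_Xs_iff fun_eq_iff)
  then show ?thesis unfolding avg_proj_kernel_def
    by (simp add: sums_unique[OF sums_single, symmetric])
qed


lemma Npos: "0 < real (card (Xs n))"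
  using fin ne by (simp add: card_gt_0_iff)

lemma cut_eq: "cut_kernel A (avg_proj_kernel Xs) B x y =
   (if x \<in> A \<and> y \<in> B \<and> idx y = idx x then 1 / of_nat (card (Xs (idx x))) else 0)"
  by (simp add: cut_kernel_def K_eq)

lemma amgm: fixes t u v :: real assumes "t > 0" shows "u * v \<le> (t * u\<^sup>2 + v\<^sup>2 / t) / 2"
proof -
  have "0 \<le> (t * u - v)\<^sup>2 / t" using assms by simp
  also have "(t * u - v)\<^sup>2 / t = t * u\<^sup>2 - 2 * u * v + v\<^sup>2 / t"
    using assms by (simp add: power2_eq_square field_simps)
  finally show ?thesis by simp
qed

lemma bound:
  fixes A B F :: "'a set" and f g :: "'a \<Rightarrow> complex" and e :: real
  assumes e: "0 \<le> e"
    and ab: "\<And>n. real (card (A \<inter> Xs n)) * real (card (B \<inter> Xs n)) \<le> e\<^sup>2 * (real (card (Xs n)))\<^sup>2"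
    and F: "finite F" and hf: "(\<Sum>x\<in>F. (cmod (f x))\<^sup>2) \<le> 1" and hg: "(\<Sum>x\<in>F. (cmod (g x))\<^sup>2) \<le> 1"
  shows "norm (\<Sum>x\<in>F. \<Sum>y\<in>F. cnj (f x) * cut_kernel A (avg_proj_kernel Xs) B x y * g y) \<le> e"
proof -
  define a where "a n = real (card (A \<inter> Xs n))" for n
  define b where "b n = real (card (B \<inter> Xs n))" for n
  define N where "N n = real (card (Xs n))" for n
  define T where "T n = sqrt (a n) / sqrt (b n)" for n
  define C where "C x y \<longleftrightarrow> x \<in> A \<and> y \<in> B \<and> idx y = idx x" for x y
  define H1 where "H1 x y = (if C x y then T (idx x) * (cmod (f x))\<^sup>2 / (2 * N (idx x)) else 0)" for x y
  define H2 where "H2 x y = (if C x y then (cmod (g y))\<^sup>2 / (2 * T (idx y) * N (idx y)) else 0)" for x y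
  have Np: "N n > 0" for n using Npos N_def by simp
  have Tn: "T n \<ge> 0" for n by (simp add: T_def a_def b_def)
  have sab: "sqrt (a n) * sqrt (b n) \<le> e * N n" for n
  proof -
    have "sqrt (a n) * sqrt (b n) = sqrt (a n * b n)" by (simp add: real_sqrt_mult)
    also have "\<dots> \<le> sqrt ((e * N n)\<^sup>2)" using ab[of n] unfolding a_def b_def N_def
      by (simp add: power_mult_distrib)
    also have "\<dots> = e * N n" using e Np[of n] by simp
    finally show ?thesis .
  qed
  have Tb: "T n * b n = sqrt (a n) * sqrt (b n)" for n
  proof (cases "b n = 0")
    case False
    have "b n \<ge> 0" by (simp add: b_def)
    then have "b n = sqrt (b n) * sqrt (b n)" by simp
    then show ?thesis using False unfolding T_def by (metis (no_types) divide_eq_0_iff nonzero_mult_div_cancel_right real_sqrt_eq_zero_cancel_iff times_divide_eq_left mult.assoc)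
  qed (simp add: T_def)
  have aT: "a n / T n = sqrt (a n) * sqrt (b n)" for n
  proof (cases "a n = 0 \<or> b n = 0")
    case False
    have "a n \<ge> 0" "b n \<ge> 0" by (simp_all add: a_def b_def)
    then have "a n = sqrt (a n) * sqrt (a n)" by simp
    then show ?thesis using False unfolding T_def
      by (smt (verit) divide_divide_eq_right nonzero_mult_div_cancel_left real_sqrt_eq_zero_cancel_iff times_divide_eq_right)
  qed (auto simp: T_def)
  have ptw: "norm (cnj (f x) * cut_kernel A (avg_proj_kernel Xs) B x y * g y) \<le> H1 x y + H2 x y" for x y
  proof (cases "C x y")
    case False
    then have "cut_kernel A (avg_proj_kernel Xs) B x y = 0" by (auto simp: cut_eq C_def)
    then show ?thesis using False by (simp add: H1_def H2_def)
  next
    case True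
    have xA: "x \<in> A \<inter> Xs (idx x)" using True in_idx C_def by auto
    have yB: "y \<in> B \<inter> Xs (idx x)" using True in_idx C_def by (metis IntI)
    have "a (idx x) > 0" unfolding a_def using xA fin
      by (metis card_gt_0_iff empty_iff finite_Int of_nat_0_less_iff)
    moreover have "b (idx x) > 0" unfolding b_def using yB fin
      by (metis card_gt_0_iff empty_iff finite_Int of_nat_0_less_iff)
    ultimately have Tp: "T (idx x) > 0" by (simp add: T_def)
    have "norm (cnj (f x) * cut_kernel A (avg_proj_kernel Xs) B x y * g y)
        = cmod (f x) * cmod (g y) / N (idx x)"
      using True by (simp add: cut_eq C_def N_def norm_mult norm_divide)
    also have "\<dots> \<le> ((T (idx x) * (cmod (f x))\<^sup>2 + (cmod (g y))\<^sup>2 / T (idx x)) / 2) / N (idx x)"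
      by (intro divide_right_mono amgm[OF Tp]) (simp add: less_imp_le Np)
    also have "\<dots> = H1 x y + H2 x y"
      using True Tp Np[of "idx x"] unfolding H1_def H2_def C_def by (simp add: field_simps)
    finally show ?thesis .
  qed
  have S1: "(\<Sum>y\<in>F. H1 x y) \<le> e / 2 * (cmod (f x))\<^sup>2" for x
  proof -
    have "(\<Sum>y\<in>F. H1 x y) = (\<Sum>y\<in>{y\<in>F. C x y}. T (idx x) * (cmod (f x))\<^sup>2 / (2 * N (idx x)))"
      by (simp only: H1_def sum.inter_filter[OF F])
    also have "\<dots> = real (card {y\<in>F. C x y}) * T (idx x) * (cmod (f x))\<^sup>2 / (2 * N (idx x))"
      by simp
    also have "\<dots> \<le> e / 2 * (cmod (f x))\<^sup>2"
    proof (cases "x \<in> A")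
      case False
      then have "{y\<in>F. C x y} = {}" by (auto simp: C_def)
      then have "card {y\<in>F. C x y} = 0" by (simp only: card.empty)
      then show ?thesis using e by simp
    next
      case True
      have "{y\<in>F. C x y} \<subseteq> B \<inter> Xs (idx x)" by (auto simp: C_def in_Xs_iff)
      then have "real (card {y\<in>F. C x y}) \<le> b (idx x)" unfolding b_def
        using fin by (simp add: card_mono)
      then have "real (card {y\<in>F. C x y}) * T (idx x) \<le> e * N (idx x)"
        using Tn Tb sab by (metis mult.commute mult_left_mono order_trans)
      then have "real (card {y\<in>F. C x y}) * T (idx x) * (cmod (f x))\<^sup>2 \<le> e * N (idx x) * (cmod (f x))\<^sup>2"
        by (simp add: mult_right_mono)
      then show ?thesis using Np[of "idx x"] by (simp add: field_simps)
    qed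
    finally show ?thesis .
  qed
  have S2: "(\<Sum>x\<in>F. H2 x y) \<le> e / 2 * (cmod (g y))\<^sup>2" for y
  proof -
    have "(\<Sum>x\<in>F. H2 x y) = (\<Sum>x\<in>{x\<in>F. C x y}. (cmod (g y))\<^sup>2 / (2 * T (idx y) * N (idx y)))"
      by (simp only: H2_def sum.inter_filter[OF F])
    also have "\<dots> = real (card {x\<in>F. C x y}) / T (idx y) * (cmod (g y))\<^sup>2 / (2 * N (idx y))"
      by simp
    also have "\<dots> \<le> e / 2 * (cmod (g y))\<^sup>2"
    proof (cases "y \<in> B")
      case False
      then have "{x\<in>F. C x y} = {}" by (auto simp: C_def)
      then have "card {x\<in>F. C x y} = 0" by (simp only: card.empty)
      then show ?thesis using e by simp
    next
      case True
      have "{x\<in>F. C x y} \<subseteq> A \<inter> Xs (idx y)" by (auto simp: C_def in_Xs_iff)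
      then have "real (card {x\<in>F. C x y}) \<le> a (idx y)" unfolding a_def
        using fin by (simp add: card_mono)
      then have "real (card {x\<in>F. C x y}) / T (idx y) \<le> e * N (idx y)"
        using Tn aT sab by (metis divide_right_mono order_trans)
      then have "real (card {x\<in>F. C x y}) / T (idx y) * (cmod (g y))\<^sup>2 \<le> e * N (idx y) * (cmod (g y))\<^sup>2"
        by (rule mult_right_mono) simp
      then have "real (card {x\<in>F. C x y}) / T (idx y) * (cmod (g y))\<^sup>2 / (2 * N (idx y)) \<le> e * N (idx y) * (cmod (g y))\<^sup>2 / (2 * N (idx y))"
        by (rule divide_right_mono) (simp add: less_imp_le Np)
      also have "e * N (idx y) * (cmod (g y))\<^sup>2 / (2 * N (idx y)) = e / 2 * (cmod (g y))\<^sup>2"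
        using Np[of "idx y"] by simp
      finally show ?thesis .
    qed
    finally show ?thesis .
  qed
  have "norm (\<Sum>x\<in>F. \<Sum>y\<in>F. cnj (f x) * cut_kernel A (avg_proj_kernel Xs) B x y * g y)
      \<le> (\<Sum>x\<in>F. norm (\<Sum>y\<in>F. cnj (f x) * cut_kernel A (avg_proj_kernel Xs) B x y * g y))"
    by (rule norm_sum)
  also have "\<dots> \<le> (\<Sum>x\<in>F. \<Sum>y\<in>F. norm (cnj (f x) * cut_kernel A (avg_proj_kernel Xs) B x y * g y))"
    by (intro sum_mono norm_sum)
  also have "\<dots> \<le> (\<Sum>x\<in>F. \<Sum>y\<in>F. H1 x y + H2 x y)"
    by (intro sum_mono ptw)
  also have "\<dots> = (\<Sum>x\<in>F. \<Sum>y\<in>F. H1 x y) + (\<Sum>y\<in>F. \<Sum>x\<in>F. H2 x y)"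
    by (simp only: sum.distrib sum.swap[of H2 F F])
  also have "\<dots> \<le> (\<Sum>x\<in>F. e / 2 * (cmod (f x))\<^sup>2) + (\<Sum>y\<in>F. e / 2 * (cmod (g y))\<^sup>2)"
    by (intro add_mono sum_mono S1 S2)
  also have "\<dots> = e / 2 * (\<Sum>x\<in>F. (cmod (f x))\<^sup>2) + e / 2 * (\<Sum>y\<in>F. (cmod (g y))\<^sup>2)"
    by (simp add: sum_distrib_left)
  also have "\<dots> \<le> e / 2 * 1 + e / 2 * 1"
    using e hf hg by (intro add_mono mult_left_mono) auto
  finally show ?thesis by simp
qed


lemma kn_le:
  assumes e: "0 \<le> e"
    and ab: "\<And>n. real (card (A \<inter> Xs n)) * real (card (B \<inter> Xs n)) \<le> e\<^sup>2 * (real (card (Xs n)))\<^sup>2"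
  shows "kernel_norm (cut_kernel A (avg_proj_kernel Xs) B) \<le> e"
  unfolding kernel_norm_def
proof (rule cSup_least)
  show "{norm (\<Sum>x\<in>F. \<Sum>y\<in>F. cnj (f x) * cut_kernel A (avg_proj_kernel Xs) B x y * g y) | F f g.
       finite F \<and> (\<Sum>x\<in>F. (cmod (f x))\<^sup>2) \<le> 1 \<and> (\<Sum>x\<in>F. (cmod (g x))\<^sup>2) \<le> 1} \<noteq> {}"
    by (rule ex_in_conv[THEN iffD1], rule exI[of _ 0], rule CollectI, rule exI[of _ "{}"]) auto
next
  fix v assume "v \<in> {norm (\<Sum>x\<in>F. \<Sum>y\<in>F. cnj (f x) * cut_kernel A (avg_proj_kernel Xs) B x y * g y) | F f g.
       finite F \<and> (\<Sum>x\<in>F. (cmod (f x))\<^sup>2) \<le> 1 \<and> (\<Sum>x\<in>F. (cmod (g x))\<^sup>2) \<le> 1}"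
  then show "v \<le> e" using bound[OF e ab] by blast
qed

lemma kn_bdd:
  "bdd_above {norm (\<Sum>x\<in>F. \<Sum>y\<in>F. cnj (f x) * cut_kernel A (avg_proj_kernel Xs) B x y * g y) | F f g.
       finite F \<and> (\<Sum>x\<in>F. (cmod (f x))\<^sup>2) \<le> 1 \<and> (\<Sum>x\<in>F. (cmod (g x))\<^sup>2) \<le> 1}"
proof (rule bdd_aboveI)
  have ab: "real (card (A \<inter> Xs n)) * real (card (B \<inter> Xs n)) \<le> 1\<^sup>2 * (real (card (Xs n)))\<^sup>2" for n
  proof -
    have "card (A \<inter> Xs n) \<le> card (Xs n)" "card (B \<inter> Xs n) \<le> card (Xs n)"
      using fin by (simp_all add: card_mono)
    then show ?thesis by (simp add: power2_eq_square mult_mono)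
  qed
  fix v assume "v \<in> {norm (\<Sum>x\<in>F. \<Sum>y\<in>F. cnj (f x) * cut_kernel A (avg_proj_kernel Xs) B x y * g y) | F f g.
       finite F \<and> (\<Sum>x\<in>F. (cmod (f x))\<^sup>2) \<le> 1 \<and> (\<Sum>x\<in>F. (cmod (g x))\<^sup>2) \<le> 1}"
  then show "v \<le> 1" using bound[of 1, OF _ ab] by fastforce
qed

lemma kn_ge:
  assumes A: "A \<subseteq> Xs n" "A \<noteq> {}" and B: "B \<subseteq> Xs n" "B \<noteq> {}"
  shows "sqrt (real (card A)) * sqrt (real (card B)) / real (card (Xs n))
     \<le> kernel_norm (cut_kernel A (avg_proj_kernel Xs) B)"
proof -
  define a where "a = real (card A)"
  define b where "b = real (card B)"
  define N where "N = real (card (Xs n))"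
  have fA: "finite A" "finite B" using A B fin finite_subset by blast+
  have ap: "a > 0" using fA A by (simp add: a_def card_gt_0_iff)
  have bp: "b > 0" using fA B by (simp add: b_def card_gt_0_iff)
  have Np: "N > 0" using Npos N_def by simp
  define F where "F = A \<union> B"
  define f where "f x = complex_of_real (if x \<in> A then 1 / sqrt a else 0)" for x
  define g where "g x = complex_of_real (if x \<in> B then 1 / sqrt b else 0)" for x
  have FF: "finite F" using fA by (simp add: F_def)
  have hf: "(\<Sum>x\<in>F. (cmod (f x))\<^sup>2) = 1"
  proof -
    have "(\<Sum>x\<in>F. (cmod (f x))\<^sup>2) = (\<Sum>x\<in>F. if x \<in> A then 1 / a else 0)"
      using ap by (intro sum.cong) (auto simp: f_def power_divide)
    also have "\<dots> = (\<Sum>x\<in>{x\<in>F. x \<in> A}. 1 / a)" by (simp only: sum.inter_filter[OF FF])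
    also have "{x\<in>F. x \<in> A} = A" by (auto simp: F_def)
    finally show ?thesis using ap by (simp add: a_def)
  qed
  have hg: "(\<Sum>x\<in>F. (cmod (g x))\<^sup>2) = 1"
  proof -
    have "(\<Sum>x\<in>F. (cmod (g x))\<^sup>2) = (\<Sum>x\<in>F. if x \<in> B then 1 / b else 0)"
      using bp by (intro sum.cong) (auto simp: g_def power_divide)
    also have "\<dots> = (\<Sum>x\<in>{x\<in>F. x \<in> B}. 1 / b)" by (simp only: sum.inter_filter[OF FF])
    also have "{x\<in>F. x \<in> B} = B" by (auto simp: F_def)
    finally show ?thesis using bp by (simp add: b_def)
  qed
  define cc where "cc = 1 / (sqrt a * N * sqrt b)"
  have trm: "cnj (f x) * cut_kernel A (avg_proj_kernel Xs) B x y * g y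
      = complex_of_real (if y \<in> B then (if x \<in> A then cc else 0) else 0)" for x y
  proof (cases "x \<in> A \<and> y \<in> B")
    case True
    then have "idx x = n" "idx y = n" using A B idx_eq by auto
    then show ?thesis using True by (simp add: cut_eq f_def g_def cc_def N_def)
  next
    case False
    then show ?thesis by (auto simp: cut_eq f_def g_def)
  qed
  have inner: "(\<Sum>x\<in>F. (if x \<in> A then cc else 0)) = a * cc"
  proof -
    have "(\<Sum>x\<in>F. (if x \<in> A then cc else 0)) = (\<Sum>x\<in>{x\<in>F. x \<in> A}. cc)" by (simp only: sum.inter_filter[OF FF])
    also have "{x\<in>F. x \<in> A} = A" by (auto simp: F_def)
    finally show ?thesis by (simp add: a_def)
  qed
  have outer: "(\<Sum>y\<in>F. (if y \<in> B then a * cc else 0)) = b * (a * cc)"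
  proof -
    have "(\<Sum>y\<in>F. (if y \<in> B then a * cc else 0)) = (\<Sum>y\<in>{y\<in>F. y \<in> B}. a * cc)" by (simp only: sum.inter_filter[OF FF])
    also have "{y\<in>F. y \<in> B} = B" by (auto simp: F_def)
    finally show ?thesis by (simp add: b_def)
  qed
  have "(\<Sum>x\<in>F. \<Sum>y\<in>F. cnj (f x) * cut_kernel A (avg_proj_kernel Xs) B x y * g y)
      = (\<Sum>x\<in>F. \<Sum>y\<in>F. complex_of_real (if y \<in> B then (if x \<in> A then cc else 0) else 0))"
    by (simp only: trm)
  also have "\<dots> = (\<Sum>y\<in>F. \<Sum>x\<in>F. complex_of_real (if y \<in> B then (if x \<in> A then cc else 0) else 0))"
    by (rule sum.swap)
  also have "\<dots> = (\<Sum>y\<in>F. complex_of_real (if y \<in> B then (\<Sum>x\<in>F. (if x \<in> A then cc else 0)) else 0))"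
  proof (rule sum.cong[OF refl])
    fix y show "(\<Sum>x\<in>F. complex_of_real (if y \<in> B then (if x \<in> A then cc else 0) else 0))
      = complex_of_real (if y \<in> B then (\<Sum>x\<in>F. (if x \<in> A then cc else 0)) else 0)"
      by (cases "y \<in> B") (simp_all only: if_True if_False of_real_sum of_real_0 sum.neutral_const)
  qed
  also have "\<dots> = complex_of_real (\<Sum>y\<in>F. (if y \<in> B then a * cc else 0))"
    by (simp only: inner of_real_sum)
  also have "\<dots> = complex_of_real (b * (a * cc))" by (simp only: outer)
  finally have val: "norm (\<Sum>x\<in>F. \<Sum>y\<in>F. cnj (f x) * cut_kernel A (avg_proj_kernel Xs) B x y * g y)
      = \<bar>b * (a * cc)\<bar>" by (simp only: norm_of_real)
  have "b * (a * cc) = sqrt a * sqrt b / N"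
  proof -
    define sa where "sa = sqrt a"
    define sb where "sb = sqrt b"
    have e1: "a = sa * sa" "b = sb * sb" using ap bp by (simp_all add: sa_def sb_def)
    have p: "sa > 0" "sb > 0" using ap bp by (simp_all add: sa_def sb_def)
    have "b * (a * cc) = (sb * sb) * ((sa * sa) * (1 / (sa * N * sb)))"
      unfolding cc_def sa_def sb_def using e1 sa_def sb_def by simp
    also have "\<dots> = sa * sb / N" using p Np by (simp add: field_simps)
    finally show ?thesis by (simp add: sa_def sb_def)
  qed
  then have "sqrt a * sqrt b / N \<in> {norm (\<Sum>x\<in>F. \<Sum>y\<in>F. cnj (f x) * cut_kernel A (avg_proj_kernel Xs) B x y * g y) | F f g.
       finite F \<and> (\<Sum>x\<in>F. (cmod (f x))\<^sup>2) \<le> 1 \<and> (\<Sum>x\<in>F. (cmod (g x))\<^sup>2) \<le> 1}"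
    using val FF hf hg ap bp Np by (intro CollectI exI[of _ F] exI[of _ f] exI[of _ g]) auto
  then show ?thesis unfolding kernel_norm_def a_def b_def N_def
    by (intro cSup_upper kn_bdd)
qed


lemma exp_block:
  assumes alp: "0 < \<alpha>" "\<alpha> \<le> \<epsilon>\<^sup>2" and c0: "0 < c0" and R0: "0 < R0"
    and ex: "\<And>n A. A \<subseteq> Xs n \<Longrightarrow> \<alpha> * real (card (Xs n)) \<le> real (card A) \<Longrightarrow> real (card A) \<le> real (card (Xs n)) / 2
       \<Longrightarrow> real (card (outer_boundary (Xs n) R0 A)) > c0 * real (card A)"
    and k: "1 / \<alpha> < (1 + c0) ^ k"
    and d: "2 * real k * R0 + 1 \<le> setdist A B"
  shows "real (card (A \<inter> Xs n)) * real (card (B \<inter> Xs n)) \<le> \<epsilon>\<^sup>2 * (real (card (Xs n)))\<^sup>2"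
proof (rule ccontr)
  assume H: "\<not> ?thesis"
  define An where "An = A \<inter> Xs n"
  define Bn where "Bn = B \<inter> Xs n"
  define N where "N = real (card (Xs n))"
  have Np: "N > 0" using Npos N_def by simp
  have fAB: "finite An" "finite Bn" using fin by (simp_all add: An_def Bn_def)
  have aN: "real (card An) \<le> N" "real (card Bn) \<le> N" using fin
    by (simp_all add: An_def Bn_def N_def card_mono)
  have H': "\<epsilon>\<^sup>2 * N\<^sup>2 < real (card An) * real (card Bn)" using H by (simp add: An_def Bn_def N_def)
  have "\<epsilon>\<^sup>2 * N * N < real (card An) * N"
    using H' mult_left_mono[OF aN(2), of "real (card An)"] by (simp add: power2_eq_square mult.assoc)
  then have a1: "\<epsilon>\<^sup>2 * N < real (card An)" using Np by simp
  have "\<epsilon>\<^sup>2 * N * N < real (card Bn) * N"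
    using H' mult_right_mono[OF aN(1), of "real (card Bn)"] by (simp add: power2_eq_square mult.assoc mult.commute)
  then have b1: "\<epsilon>\<^sup>2 * N < real (card Bn)" using Np by simp
  have aal: "\<alpha> * N \<le> real (card An)" "\<alpha> * N \<le> real (card Bn)"
    using a1 b1 alp Np by (smt (verit) mult_right_mono)+
  have Ane: "An \<noteq> {}" "Bn \<noteq> {}" using a1 b1 Np alp
    by (metis card.empty of_nat_0 not_less zero_le_mult_iff zero_le_power2 less_imp_le)+
  define SA where "SA = {x\<in>Xs n. infdist x An \<le> real k * R0}"
  define SB where "SB = {x\<in>Xs n. infdist x Bn \<le> real k * R0}"
  have exn: "\<And>S. S \<subseteq> Xs n \<Longrightarrow> \<alpha> * real (card (Xs n)) \<le> real (card S) \<Longrightarrow> real (card S) \<le> real (card (Xs n)) / 2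
       \<Longrightarrow> real (card (outer_boundary (Xs n) R0 S)) > c0 * real (card S)" using ex by blast
  have bigA: "real (card SA) > N / 2" unfolding SA_def N_def
    by (rule grow_big[OF fin _ Ane(1) _ c0 alp(1) _ exn k])
       (use R0 aal N_def in \<open>auto simp: An_def\<close>)
  have bigB: "real (card SB) > N / 2" unfolding SB_def N_def
    by (rule grow_big[OF fin _ Ane(2) _ c0 alp(1) _ exn k])
       (use R0 aal N_def in \<open>auto simp: Bn_def\<close>)
  have dis: "SA \<inter> SB = {}"
  proof (rule ccontr)
    assume "SA \<inter> SB \<noteq> {}"
    then obtain x where x: "x \<in> SA" "x \<in> SB" by blast
    obtain y where y: "y \<in> An" "infdist x An = dist x y" using infdist_finite_attains[OF fAB(1) Ane(1)] by blast
    obtain z where z: "z \<in> Bn" "infdist x Bn = dist x z" using infdist_finite_attains[OF fAB(2) Ane(2)] by blast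
    have "setdist A B \<le> dist y z" using y z by (intro setdist_le_dist) (auto simp: An_def Bn_def)
    also have "\<dots> \<le> dist x y + dist x z" by (metis dist_commute dist_triangle)
    also have "\<dots> \<le> 2 * real k * R0" using x y z by (simp add: SA_def SB_def)
    finally show False using d by simp
  qed
  have "real (card SA) + real (card SB) = real (card (SA \<union> SB))"
    using dis fin by (simp add: card_Un_disjoint SA_def SB_def)
  also have "\<dots> \<le> N" unfolding N_def using fin by (simp add: card_mono SA_def SB_def)
  finally show False using bigA bigB by simp
qed

lemma ql_P2:
  assumes ql: "quasi_local (avg_proj_kernel Xs)" and ac: "0 < \<alpha>" "\<alpha> \<le> 1/2" "0 < c" "c < 1"
  shows "\<exists>R>0. \<forall>n A. A \<subseteq> Xs n \<and> \<alpha> * real (card (Xs n)) \<le> real (card A)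
                     \<and> real (card A) \<le> real (card (Xs n)) / 2
                     \<longrightarrow> real (card (outer_boundary (Xs n) R A)) > c * real (card A)"
proof -
  define \<epsilon> where "\<epsilon> = sqrt (\<alpha> * (1 - c) / 4)"
  have ep: "\<epsilon> > 0" using ac by (simp add: \<epsilon>_def)
  have ep2: "\<epsilon>\<^sup>2 = \<alpha> * (1 - c) / 4" using ac by (simp add: \<epsilon>_def)
  obtain R where R: "R > 0" and HR: "\<And>A B. setdist A B \<ge> R \<Longrightarrow> kernel_norm (cut_kernel A (avg_proj_kernel Xs) B) \<le> \<epsilon>"
    using ql ep unfolding quasi_local_def by blast
  show ?thesis
  proof (intro exI[of _ R] conjI allI impI R)
    fix n A assume asm: "A \<subseteq> Xs n \<and> \<alpha> * real (card (Xs n)) \<le> real (card A) \<and> real (card A) \<le> real (card (Xs n)) / 2"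
    define N where "N = real (card (Xs n))"
    define a where "a = real (card A)"
    define Bs where "Bs = {x\<in>Xs n. R < infdist x A}"
    define b where "b = real (card Bs)"
    define D where "D = outer_boundary (Xs n) R A"
    have Np: "N > 0" using Npos N_def by simp
    have AX: "A \<subseteq> Xs n" using asm by simp
    have fA: "finite A" using AX fin finite_subset by blast
    have aa: "\<alpha> * N \<le> a" "a \<le> N / 2" using asm by (simp_all add: N_def a_def)
    have ap: "a > 0" using aa Np ac by (smt (verit) mult_pos_pos)
    have Ane: "A \<noteq> {}" using ap by (auto simp: a_def)
    have bb: "b \<le> (1 - c) / 4 * N"
    proof (cases "Bs = {}")
      case True
      then show ?thesis using ac Np by (simp add: b_def)
    next
      case False
      have "R \<le> setdist A Bs" unfolding le_setdist_iff
      proof (intro conjI ballI impI)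
        fix x y assume "x \<in> A" "y \<in> Bs"
        then show "R \<le> dist x y" using infdist_le[of x A y] by (auto simp: Bs_def dist_commute)
      next
        assume "A = {} \<or> Bs = {}" then show "R \<le> 0" using Ane False by simp
      qed
      then have kn: "kernel_norm (cut_kernel A (avg_proj_kernel Xs) Bs) \<le> \<epsilon>" by (rule HR)
      have "sqrt a * sqrt b / N \<le> \<epsilon>"
        using kn_ge[OF AX Ane _ False] kn by (auto simp: a_def b_def N_def Bs_def)
      then have "sqrt a * sqrt b \<le> \<epsilon> * N" using Np by (simp add: field_simps)
      then have "(sqrt a * sqrt b)\<^sup>2 \<le> (\<epsilon> * N)\<^sup>2" using ap by (intro power_mono) (auto simp: b_def)
      then have "a * b \<le> \<epsilon>\<^sup>2 * N\<^sup>2" using ap by (simp add: power_mult_distrib b_def)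
      then have "a * b \<le> \<alpha> * N * ((1 - c) / 4 * N)"
      proof -
        have "\<epsilon>\<^sup>2 * N\<^sup>2 = \<alpha> * N * ((1 - c) / 4 * N)" unfolding ep2 by (simp add: power2_eq_square)
        then show ?thesis using \<open>a * b \<le> \<epsilon>\<^sup>2 * N\<^sup>2\<close> by simp
      qed
      moreover have "\<alpha> * N * b \<le> a * b" using aa by (simp add: b_def mult_right_mono)
      ultimately have "\<alpha> * N * b \<le> \<alpha> * N * ((1 - c) / 4 * N)" by simp
      then show ?thesis using ac Np by simp
    qed
    have part: "Xs n = A \<union> (D \<union> Bs)" using AX
      by (auto simp: D_def Bs_def outer_boundary_def)
    have "N = a + (real (card D) + b)"
    proof -
      have fD: "finite D" "finite Bs" using fin by (auto simp: D_def Bs_def outer_boundary_def)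
      have "card (Xs n) = card A + card (D \<union> Bs)"
        unfolding part using fA fD R by (intro card_Un_disjoint) (auto simp: D_def Bs_def outer_boundary_def)
      also have "card (D \<union> Bs) = card D + card Bs"
        using fD by (intro card_Un_disjoint) (auto simp: D_def Bs_def outer_boundary_def)
      finally show ?thesis by (simp add: N_def a_def b_def)
    qed
    moreover have "(1 + c) * a \<le> (1 + c) * (N / 2)" using aa ac by (intro mult_left_mono) auto
    moreover have "(1 - c) * N > 0" using ac Np by simp
    ultimately have "real (card D) > c * a" using bb by (simp add: algebra_simps)
    then show "real (card (outer_boundary (Xs n) R A)) > c * real (card A)" by (simp add: D_def a_def)
  qed
qed

end

theorem theorem3p10:
  fixes Xs :: "nat \<Rightarrow> 'a::metric_space set"
  assumes "coarse_disjoint_union Xs"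
    and "filterlim (\<lambda>n. card (Xs n)) at_top sequentially"
  shows "(quasi_local (avg_proj_kernel Xs) \<longleftrightarrow>
           (\<forall>\<alpha> c. 0 < \<alpha> \<and> \<alpha> \<le> 1/2 \<and> 0 < c \<and> c < 1 \<longrightarrow>
              (\<exists>R>0. \<forall>n A. A \<subseteq> Xs n \<and> \<alpha> * real (card (Xs n)) \<le> real (card A)
                     \<and> real (card A) \<le> real (card (Xs n)) / 2
                     \<longrightarrow> real (card (outer_boundary (Xs n) R A)) > c * real (card A))))
       \<and> ((\<forall>\<alpha> c. 0 < \<alpha> \<and> \<alpha> \<le> 1/2 \<and> 0 < c \<and> c < 1 \<longrightarrow>
              (\<exists>R>0. \<forall>n A. A \<subseteq> Xs n \<and> \<alpha> * real (card (Xs n)) \<le> real (card A)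
                     \<and> real (card A) \<le> real (card (Xs n)) / 2
                     \<longrightarrow> real (card (outer_boundary (Xs n) R A)) > c * real (card A)))
          \<longleftrightarrow>
           (\<forall>\<alpha>. 0 < \<alpha> \<and> \<alpha> \<le> 1/2 \<longrightarrow>
              (\<exists>c R. 0 < c \<and> c < 1 \<and> 0 < R \<and> (\<forall>n A. A \<subseteq> Xs n \<and> \<alpha> * real (card (Xs n)) \<le> real (card A)
                     \<and> real (card A) \<le> real (card (Xs n)) / 2
                     \<longrightarrow> real (card (outer_boundary (Xs n) R A)) > c * real (card A)))))"
  proof -
  have cd: "coarse_disjoint_union Xs" by fact
  interpret cdu Xs
  proof
    show "\<And>n. finite (Xs n)" "\<And>n. Xs n \<noteq> {}" using cd by (simp_all add: coarse_disjoint_union_def)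
    show "\<And>n m. n \<noteq> m \<Longrightarrow> Xs n \<inter> Xs m = {}" using cd by (simp add: coarse_disjoint_union_def)
    show "\<And>x. \<exists>n. x \<in> Xs n" using cd unfolding coarse_disjoint_union_def by (metis UNIV_I UN_E)
  qed
  define P2 where "P2 \<longleftrightarrow> (\<forall>\<alpha> c. 0 < \<alpha> \<and> \<alpha> \<le> 1/2 \<and> 0 < c \<and> c < 1 \<longrightarrow>
              (\<exists>R>0. \<forall>n A. A \<subseteq> Xs n \<and> \<alpha> * real (card (Xs n)) \<le> real (card A)
                     \<and> real (card A) \<le> real (card (Xs n)) / 2
                     \<longrightarrow> real (card (outer_boundary (Xs n) R A)) > c * real (card A)))"
  define P3 where "P3 \<longleftrightarrow> (\<forall>\<alpha>. 0 < \<alpha> \<and> \<alpha> \<le> 1/2 \<longrightarrow>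
              (\<exists>c R. 0 < c \<and> c < 1 \<and> 0 < R \<and> (\<forall>n A. A \<subseteq> Xs n \<and> \<alpha> * real (card (Xs n)) \<le> real (card A)
                     \<and> real (card A) \<le> real (card (Xs n)) / 2
                     \<longrightarrow> real (card (outer_boundary (Xs n) R A)) > c * real (card A))))"
  have I1: "quasi_local (avg_proj_kernel Xs) \<Longrightarrow> P2"
    unfolding P2_def using ql_P2 by blast
  have I2: "P2 \<Longrightarrow> P3"
  proof -
    assume p2: P2
    show P3 unfolding P3_def
    proof (intro allI impI)
      fix \<alpha> :: real assume "0 < \<alpha> \<and> \<alpha> \<le> 1/2"
      then have h: "0 < \<alpha> \<and> \<alpha> \<le> 1/2 \<and> 0 < (1/2::real) \<and> (1/2::real) < 1" by simp
      obtain R where "R > 0" and "\<forall>n A. A \<subseteq> Xs n \<and> \<alpha> * real (card (Xs n)) \<le> real (card A)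
                     \<and> real (card A) \<le> real (card (Xs n)) / 2
                     \<longrightarrow> real (card (outer_boundary (Xs n) R A)) > 1/2 * real (card A)"
        using p2[unfolded P2_def, rule_format, OF h] by blast
      then show "\<exists>c R. 0 < c \<and> c < 1 \<and> 0 < R \<and> (\<forall>n A. A \<subseteq> Xs n \<and> \<alpha> * real (card (Xs n)) \<le> real (card A)
                     \<and> real (card A) \<le> real (card (Xs n)) / 2
                     \<longrightarrow> real (card (outer_boundary (Xs n) R A)) > c * real (card A))"
        by (intro exI[of _ "1/2"] exI[of _ R]) auto
    qed
  qed
  have I3: "P3 \<Longrightarrow> quasi_local (avg_proj_kernel Xs)"
  proof -
    assume p3: P3
    show ?thesis unfolding quasi_local_def
    proof (intro allI impI)
      fix \<epsilon> :: real assume ep: "\<epsilon> > 0"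
      define \<alpha> where "\<alpha> = min (\<epsilon>\<^sup>2) (1/2)"
      have alp: "0 < \<alpha>" "\<alpha> \<le> 1/2" "\<alpha> \<le> \<epsilon>\<^sup>2" using ep by (auto simp: \<alpha>_def)
      obtain c0 R0 where c0: "0 < c0" and R0: "0 < R0" and
        ex: "\<forall>n A. A \<subseteq> Xs n \<and> \<alpha> * real (card (Xs n)) \<le> real (card A)
                     \<and> real (card A) \<le> real (card (Xs n)) / 2
                     \<longrightarrow> real (card (outer_boundary (Xs n) R0 A)) > c0 * real (card A)"
        using p3 alp unfolding P3_def by blast
      obtain k where k: "1 / \<alpha> < (1 + c0) ^ k" using real_arch_pow[of "1 + c0" "1 / \<alpha>"] c0 by auto
      show "\<exists>R>0. \<forall>A B. R \<le> setdist A B \<longrightarrow> kernel_norm (cut_kernel A (avg_proj_kernel Xs) B) \<le> \<epsilon>"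
      proof (intro exI[of _ "2 * real k * R0 + 1"] conjI allI impI)
        have "0 \<le> 2 * real k * R0" using R0 by simp
        then show "0 < 2 * real k * R0 + 1" by linarith
        fix A B :: "'a set" assume d: "2 * real k * R0 + 1 \<le> setdist A B"
        show "kernel_norm (cut_kernel A (avg_proj_kernel Xs) B) \<le> \<epsilon>"
          using ep by (intro kn_le exp_block[OF alp(1) alp(3) c0 R0 _ k d]) (use ex in auto)
      qed
    qed
  qed
  show ?thesis using I1 I2 I3 unfolding P2_def[symmetric] P3_def[symmetric] by blast
qed

end
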